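(* Let $X=\{x\in\mathbb{R}^n: Cx\le d\}$ be polyhedral, $g:\mathbb{R}^m\to\mathbb{R}$ be $\sigma_g$-strongly convex with $L_g$-Lipschitz gradient, $A\in\mathbb{R}^{m\times n}$ nonzero, $c\in\mathbb{R}^n$, and $f(x)=g(Ax)+c^Tx$. Assume the optimal set $X^*$ of $f^*=\min_{x\in X}f(x)$ is nonempty. Then there exist unique $t^*\in\mathbb{R}^m$, $s^*\in\mathbb{R}$ with $Ax^*=t^*$, $c^Tx^*=s^*$ for all $x^*\in X^*$, and $X^*=\{x: Ax=t^*,\ c^Tx=s^*,\ Cx\le d\}$. Let $\theta>0$ be a Hoffman constant for this polyhedron: $$\|x-[x]_{X^*}\|\le\theta\left\|\begin{pmatrix}Ax-t^*\\ c^Tx-s^*\\ [Cx-d]_+\end{pmatrix}\right\|\qquad\forall x\in\mathbb{R}^n,$$ and let $c_g=\|\nabla g(t^* )\|$. Then $\nabla f$ is Lipschitz with constant $L_f=L_g\|A\|^2$, and for every $M>0$, with $X_M=\{x\in X: f(x)-f^*\le M\}$, $$f(x)-f^*\ge\frac{\kappa_f}{2}\|x-[x]_{X^*}\|^2\quad\forall x\in X_M,\qquad\kappa_f=\frac{\sigma_g}{\theta^2\,(1+M\sigma_g+2c_g^2)}.$$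
   Context: $\|\cdot\|$ denotes the Euclidean norm (spectral norm for matrices), $[u]_S$ the Euclidean projection onto a closed convex set $S$, and $[v]_+$ the componentwise positive part. $g$ is $\sigma_g$-strongly convex means $g(z)\ge g(w)+\langle\nabla g(w),z-w\rangle+\frac{\sigma_g}{2}\|z-w\|^2$ for all $z,w$, with $\sigma_g>0$. *)

theory Defs
  imports "HOL-Analysis.Analysis"
begin

definition strongly_convex_grad ::
  "('a::real_inner \<Rightarrow> real) \<Rightarrow> ('a \<Rightarrow> 'a) \<Rightarrow> real \<Rightarrow> bool" where
  "strongly_convex_grad g gradg \<sigma> \<longleftrightarrow> \<sigma> > 0 \<and>
     (\<forall>z w. g z \<ge> g w + inner (gradg w) (z - w) + \<sigma> / 2 * (norm (z - w))\<^sup>2)"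

definition is_gradient :: "('a::real_inner \<Rightarrow> real) \<Rightarrow> ('a \<Rightarrow> 'a) \<Rightarrow> bool" where
  "is_gradient g gradg \<longleftrightarrow> (\<forall>z. (g has_derivative (\<lambda>h. inner (gradg z) h)) (at z))"

definition pos_part :: "real ^ 'p \<Rightarrow> real ^ 'p" where
  "pos_part v = (\<chi> i. max 0 (v $ i))"

definition mat_norm :: "real ^ 'n ^ 'm \<Rightarrow> real" where
  "mat_norm A = onorm (\<lambda>x. A *v x)"

end

theory Submission
  imports Defs
begin

lemma small_nonneg:
  fixes a K :: real
  assumes "\<And>l. 0 < l \<Longrightarrow> l \<le> 1 \<Longrightarrow> a \<ge> - K * l" and "K \<ge> 0"
  shows "a \<ge> 0"
proof (rule ccontr)
  assume "\<not> a \<ge> 0"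
  define l where "l = min 1 (- a / (2*K + 1))"
  have "- a / (2*K + 1) > 0" using \<open>\<not> a \<ge> 0\<close> assms(2) by (intro divide_pos_pos) auto
  then have l: "0 < l" "l \<le> 1" by (auto simp: l_def)
  have "K * l \<le> K * (- a / (2*K+1))" using assms(2) by (intro mult_left_mono) (auto simp: l_def)
  also have "\<dots> < - a"
  proof -
    have "a * (1 + K) < 0" using \<open>\<not> a \<ge> 0\<close> assms(2) by (intro mult_neg_pos) auto
    then show ?thesis using assms(2) by (simp add: field_simps)
  qed
  finally show False using assms(1)[OF l] by linarith
qed

lemma transpose_norm_le:
  fixes A :: "real ^ 'n ^ 'm"
  shows "norm (transpose A *v v) \<le> mat_norm A * norm v"
proof -
  let ?w = "transpose A *v v"
  have "(norm ?w)\<^sup>2 = inner ?w ?w" by (simp add: power2_norm_eq_inner)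
  also have "\<dots> = inner v (A *v ?w)" by (simp add: dot_lmul_matrix)
  also have "\<dots> \<le> norm v * norm (A *v ?w)" by (rule norm_cauchy_schwarz)
  also have "\<dots> \<le> norm v * (mat_norm A * norm ?w)"
    unfolding mat_norm_def by (intro mult_left_mono onorm) auto
  finally have *: "norm ?w * norm ?w \<le> (mat_norm A * norm v) * norm ?w"
    by (simp add: power2_eq_square algebra_simps)
  show ?thesis
  proof (cases "norm ?w = 0")
    case True
    have "mat_norm A \<ge> 0" unfolding mat_norm_def by (intro onorm_pos_le) auto
    then show ?thesis using True by simp
  next
    case False
    then show ?thesis using * by (simp add: mult_le_cancel_right)
  qed
qed

lemma half0: fixes x y :: "'a::real_vector" shows "x - (y + c *\<^sub>R (x - y)) = (1 - c) *\<^sub>R (x - y)"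
proof -
  have "x - (y + c *\<^sub>R (x - y)) = (x - y) - c *\<^sub>R (x - y)" by (simp add: algebra_simps)
  also have "\<dots> = (1 - c) *\<^sub>R (x - y)" by (simp add: scaleR_left_diff_distrib)
  finally show ?thesis .
qed
lemma half1: fixes x y :: "'a::real_vector" shows "x - (y + (1/2::real) *\<^sub>R (x - y)) = (1/2) *\<^sub>R (x - y)"
  using half0[of x y "1/2"] by simp

theorem theorem10:
  fixes C :: "real ^ 'n ^ 'p" and d :: "real ^ 'p"
    and A :: "real ^ 'n ^ 'm" and c :: "real ^ 'n"
    and g :: "real ^ 'm \<Rightarrow> real" and gradg :: "real ^ 'm \<Rightarrow> real ^ 'm"
    and \<sigma>g Lg :: real
    and f :: "real ^ 'n \<Rightarrow> real"
    and X Xstar :: "(real ^ 'n) set" and fstar :: real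
  assumes X_def: "X = {x. \<forall>i. (C *v x) $ i \<le> d $ i}"
    and grad: "is_gradient g gradg"
    and sc: "strongly_convex_grad g gradg \<sigma>g"
    and lip: "\<forall>z w. norm (gradg z - gradg w) \<le> Lg * norm (z - w)"
    and A_nz: "A \<noteq> 0"
    and f_def: "\<forall>x. f x = g (A *v x) + inner c x"
    and fstar_def: "fstar = Inf (f ` X)"
    and Xstar_def: "Xstar = {x \<in> X. f x = fstar \<and> (\<forall>y\<in>X. f x \<le> f y)}"
    and Xstar_ne: "Xstar \<noteq> {}"
  shows
    "(\<exists>!ts :: (real ^ 'm) \<times> real. \<forall>x\<in>Xstar. A *v x = fst ts \<and> inner c x = snd ts)
     \<and> (\<forall>tstar sstar. (\<forall>x\<in>Xstar. A *v x = tstar \<and> inner c x = sstar) \<longrightarrow>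
          Xstar = {x. A *v x = tstar \<and> inner c x = sstar \<and> (\<forall>i. (C *v x) $ i \<le> d $ i)}
          \<and> (\<forall>\<theta>::real. \<theta> > 0 \<longrightarrow>
               (\<forall>x. norm (x - closest_point Xstar x)
                     \<le> \<theta> * norm (A *v x - tstar, inner c x - sstar, pos_part (C *v x - d))) \<longrightarrow>
               (\<forall>M::real. M > 0 \<longrightarrow>
                  (\<forall>x \<in> {x \<in> X. f x - fstar \<le> M}.
                     f x - fstar \<ge>
                       (\<sigma>g / (\<theta>\<^sup>2 * (1 + M * \<sigma>g + 2 * (norm (gradg tstar))\<^sup>2))) / 2
                       * (norm (x - closest_point Xstar x))\<^sup>2))))
     \<and> (\<exists>gradf :: real ^ 'n \<Rightarrow> real ^ 'n. is_gradient f gradf \<and>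
          (\<forall>x y. norm (gradf x - gradf y) \<le> Lg * (mat_norm A)\<^sup>2 * norm (x - y)))"
proof -
  have \<sigma>pos: "\<sigma>g > 0" using sc unfolding strongly_convex_grad_def by auto
  have scI: "g z \<ge> g w + inner (gradg w) (z - w) + \<sigma>g / 2 * (norm (z - w))\<^sup>2" for z w
    using sc unfolding strongly_convex_grad_def by auto
  have scI': "g z \<ge> g w + inner (gradg w) (z - w)" for z w
  proof -
    have "0 \<le> \<sigma>g/2 * (norm (z - w))\<^sup>2" using \<sigma>pos by simp
    then show ?thesis using scI[where z=z and w=w] by linarith
  qed
  have Lg0: "Lg \<ge> 0"
  proof -
    obtain i :: 'm where True by blast
    let ?z = "axis i (1::real) :: real ^ 'm"
    have "norm ?z > 0" by simp
    moreover have "0 \<le> Lg * norm (?z - 0)" using lip by (meson norm_ge_zero order_trans)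
    ultimately show ?thesis by (simp add: zero_le_mult_iff)
  qed
  have lin: "\<And>x y (l::real). A *v (x + l *\<^sub>R (y - x)) - A *v x = l *\<^sub>R (A *v y - A *v x)"
    by (simp add: algebra_simps)
  have Xconv: "x + l *\<^sub>R (y - x) \<in> X" if "x \<in> X" "y \<in> X" "0 \<le> l" "l \<le> 1" for x y l
  proof -
    have "(C *v (x + l *\<^sub>R (y - x))) $ i \<le> d $ i" for i
    proof -
      have e: "(C *v (x + l *\<^sub>R (y - x))) $ i = (1 - l) * (C *v x) $ i + l * (C *v y) $ i"
        by (simp add: algebra_simps)
      have "(1 - l) * (C *v x) $ i \<le> (1 - l) * d $ i" using that X_def by (intro mult_left_mono) auto
      moreover have "l * (C *v y) $ i \<le> l * d $ i" using that X_def by (intro mult_left_mono) auto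
      ultimately show ?thesis unfolding e by (simp add: algebra_simps)
    qed
    then show ?thesis using X_def by auto
  qed
  have Aconst: "A *v x1 = A *v x2" if x1: "x1 \<in> Xstar" and x2: "x2 \<in> Xstar" for x1 x2
  proof -
    define m where "m = x1 + (1/2) *\<^sub>R (x2 - x1)"
    have mX: "m \<in> X" unfolding m_def using x1 x2 Xstar_def by (intro Xconv) auto
    have fm: "f m \<ge> fstar" using x1 mX Xstar_def by auto
    define u where "u = A *v x2 - A *v x1"
    have Am: "A *v m = A *v x1 + (1/2) *\<^sub>R u" unfolding m_def u_def
      using lin[of x1 "1/2" x2] by (simp add: algebra_simps)
    have a1: "A *v x1 - A *v m = - (1/2) *\<^sub>R u" unfolding Am by simp
    have a2: "A *v x2 - A *v m = (1/2) *\<^sub>R u" unfolding Am u_def by (rule half1)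
    have cm: "inner c m = (inner c x1 + inner c x2) / 2" unfolding m_def by (simp add: algebra_simps)
    define T where "T = \<sigma>g/2 * (norm ((1/2) *\<^sub>R u))\<^sup>2"
    define a where "a = inner (gradg (A *v m)) ((1/2) *\<^sub>R u)"
    have am: "inner (gradg (A *v m)) (- (1/2) *\<^sub>R u) = - a" unfolding a_def by simp
    have i1: "g (A *v x1) \<ge> g (A *v m) - a + T"
      using scI[where z="A *v x1" and w="A *v m"] unfolding a1 am T_def by simp
    have i2: "g (A *v x2) \<ge> g (A *v m) + a + T"
      using scI[where z="A *v x2" and w="A *v m"] unfolding a2 a_def T_def by simp
    have "f x1 = fstar" "f x2 = fstar" using x1 x2 Xstar_def by auto
    then have e1: "g (A *v x1) + g (A *v x2) + inner c x1 + inner c x2 = 2 * fstar" using f_def by simp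
    have e2: "2 * f m = 2 * g (A *v m) + (inner c x1 + inner c x2)" using f_def cm by simp
    have s1: "2 * g (A *v m) + 2 * T \<le> g (A *v x1) + g (A *v x2)" using i1 i2 by linarith
    have s2: "2 * fstar \<le> 2 * g (A *v m) + (inner c x1 + inner c x2)" using e2 fm by linarith
    have "T \<le> 0" using s1 s2 e1 by linarith
    then have "\<sigma>g * (norm ((1/2) *\<^sub>R u))\<^sup>2 \<le> 0" unfolding T_def by simp
    then have "(norm ((1/2) *\<^sub>R u))\<^sup>2 \<le> 0" using \<sigma>pos by (simp add: mult_le_0_iff)
    then have "norm ((1/2) *\<^sub>R u) = 0" by simp
    then show ?thesis unfolding u_def by simp
  qed
  have cconst: "inner c x1 = inner c x2" if x1: "x1 \<in> Xstar" and x2: "x2 \<in> Xstar" for x1 x2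
  proof -
    have "f x1 = f x2" using x1 x2 Xstar_def by auto
    then show ?thesis using f_def Aconst[OF x1 x2] by simp
  qed
  obtain x0 where x0: "x0 \<in> Xstar" using Xstar_ne by blast
  have P1: "\<exists>!ts :: (real ^ 'm) \<times> real. \<forall>x\<in>Xstar. A *v x = fst ts \<and> inner c x = snd ts"
  proof (rule ex1I[of _ "(A *v x0, inner c x0)"])
    show "\<forall>x\<in>Xstar. A *v x = fst (A *v x0, inner c x0) \<and> inner c x = snd (A *v x0, inner c x0)"
    proof
      fix x assume "x \<in> Xstar"
      then show "A *v x = fst (A *v x0, inner c x0) \<and> inner c x = snd (A *v x0, inner c x0)"
        using Aconst[of x x0] cconst[of x x0] x0 by simp
    qed
  next
    fix ts :: "(real ^ 'm) \<times> real" assume "\<forall>x\<in>Xstar. A *v x = fst ts \<and> inner c x = snd ts"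
    then show "ts = (A *v x0, inner c x0)" using x0 by (cases ts) auto
  qed
  have P2: "Xstar = {x. A *v x = tstar \<and> inner c x = sstar \<and> (\<forall>i. (C *v x) $ i \<le> d $ i)}
          \<and> (\<forall>\<theta>::real. \<theta> > 0 \<longrightarrow>
               (\<forall>x. norm (x - closest_point Xstar x)
                     \<le> \<theta> * norm (A *v x - tstar, inner c x - sstar, pos_part (C *v x - d))) \<longrightarrow>
               (\<forall>M::real. M > 0 \<longrightarrow>
                  (\<forall>x \<in> {x \<in> X. f x - fstar \<le> M}.
                     f x - fstar \<ge>
                       (\<sigma>g / (\<theta>\<^sup>2 * (1 + M * \<sigma>g + 2 * (norm (gradg tstar))\<^sup>2))) / 2
                       * (norm (x - closest_point Xstar x))\<^sup>2)))"
    if ts: "\<forall>x\<in>Xstar. A *v x = tstar \<and> inner c x = sstar" for tstar sstar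
  proof -
    have XS: "Xstar = {x. A *v x = tstar \<and> inner c x = sstar \<and> (\<forall>i. (C *v x) $ i \<le> d $ i)}"
    proof (intro set_eqI iffI)
      fix x assume "x \<in> Xstar" then show "x \<in> {x. A *v x = tstar \<and> inner c x = sstar \<and> (\<forall>i. (C *v x) $ i \<le> d $ i)}"
        using ts Xstar_def X_def by auto
    next
      fix x assume x: "x \<in> {x. A *v x = tstar \<and> inner c x = sstar \<and> (\<forall>i. (C *v x) $ i \<le> d $ i)}"
      have "f x = f x0" using x ts x0 f_def by simp
      then show "x \<in> Xstar" using x x0 Xstar_def X_def by auto
    qed
    have closedXS: "closed Xstar" unfolding XS
    proof -
      have cA: "continuous_on UNIV (\<lambda>x. A *v x)" by (intro linear_continuous_on) simp
      have cC: "continuous_on UNIV (\<lambda>x. (C *v x) $ i)" for i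
      proof -
        have "continuous_on UNIV (\<lambda>x. C *v x)" by (intro linear_continuous_on) simp
        then show ?thesis by (rule continuous_on_component)
      qed
      have cc: "continuous_on UNIV (\<lambda>x. inner c x)" by (intro continuous_intros)
      have "closed {x. A *v x = tstar}" by (rule closed_Collect_eq[OF cA continuous_on_const])
      moreover have "closed {x. inner c x = sstar}" by (rule closed_Collect_eq[OF cc continuous_on_const])
      moreover have "closed {x. (C *v x) $ i \<le> d $ i}" for i
        by (rule closed_Collect_le[OF cC continuous_on_const])
      then have "closed {x. \<forall>i. (C *v x) $ i \<le> d $ i}" by (intro closed_Collect_all)
      ultimately show "closed {x. A *v x = tstar \<and> inner c x = sstar \<and> (\<forall>i. (C *v x) $ i \<le> d $ i)}"
        by (intro closed_Collect_conj)
    qed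
    have bound: "f x - fstar \<ge> (\<sigma>g / (\<theta>\<^sup>2 * (1 + M * \<sigma>g + 2 * (norm (gradg tstar))\<^sup>2))) / 2
                       * (norm (x - closest_point Xstar x))\<^sup>2"
      if th: "\<theta> > 0" and hof: "\<forall>x. norm (x - closest_point Xstar x)
                     \<le> \<theta> * norm (A *v x - tstar, inner c x - sstar, pos_part (C *v x - d))"
        and M: "M > 0" and x: "x \<in> X" "f x - fstar \<le> M" for \<theta> M x
    proof -
      define xb where "xb = closest_point Xstar x"
      have xb: "xb \<in> Xstar" unfolding xb_def using closedXS Xstar_ne by (rule closest_point_in_set)
      have xbX: "xb \<in> X" and fxb: "f xb = fstar" and xbmin: "\<forall>y\<in>X. f xb \<le> f y"
        using xb Xstar_def by auto
      have Axb: "A *v xb = tstar" and cxb: "inner c xb = sstar" using ts xb by auto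
      define u where "u = A *v x - tstar"
      define e where "e = inner c x - sstar"
      define \<delta> where "\<delta> = f x - fstar"
      define r where "r = norm u"
      define cg where "cg = norm (gradg tstar)"
      have fo: "inner (gradg tstar) u + e \<ge> 0"
      proof (rule small_nonneg[where K = "Lg * r\<^sup>2"])
        show "0 \<le> Lg * r\<^sup>2" using Lg0 by simp
        fix l :: real assume l: "0 < l" "l \<le> 1"
        define y where "y = xb + l *\<^sub>R (x - xb)"
        have yX: "y \<in> X" unfolding y_def using xbX x l by (intro Xconv) auto
        have Ay: "A *v y - tstar = l *\<^sub>R u" unfolding y_def u_def using Axb lin[of xb l x] by simp
        have cy: "inner c y - sstar = l * e" unfolding y_def e_def using cxb by (simp add: algebra_simps)
        have "f y \<ge> fstar" using xbmin yX fxb by auto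
        moreover have "g tstar \<ge> g (A *v y) + inner (gradg (A *v y)) (tstar - A *v y)" by (rule scI')
        moreover have "fstar = g tstar + sstar" using fxb f_def Axb cxb by simp
        moreover have "f y = g (A *v y) + inner c y" using f_def by simp
        moreover have "tstar - A *v y = - (l *\<^sub>R u)" using Ay by (simp add: algebra_simps)
        ultimately have "0 \<le> l * (inner (gradg (A *v y)) u + e)" using cy
          by (simp add: algebra_simps inner_minus_right)
        then have h1: "0 \<le> inner (gradg (A *v y)) u + e" using l by (simp add: zero_le_mult_iff)
        have "inner (gradg (A *v y) - gradg tstar) u \<le> norm (gradg (A *v y) - gradg tstar) * r"
          unfolding r_def by (rule norm_cauchy_schwarz)
        also have "\<dots> \<le> (Lg * norm (A *v y - tstar)) * r" unfolding r_def
          using lip by (intro mult_right_mono) auto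
        also have "\<dots> = Lg * r\<^sup>2 * l" using Ay l unfolding r_def by (simp add: power2_eq_square)
        finally show "inner (gradg tstar) u + e \<ge> - (Lg * r\<^sup>2) * l" using h1
          by (simp add: inner_diff_left)
      qed
      have fx: "f x = g (A *v x) + inner c x" using f_def by simp
      have fs: "fstar = g tstar + sstar" using fxb f_def Axb cxb by simp
      have sci: "g (A *v x) \<ge> g tstar + inner (gradg tstar) u + \<sigma>g/2 * r\<^sup>2"
        using scI[where z="A *v x" and w=tstar] unfolding u_def r_def .
      have d1: "\<delta> \<ge> inner (gradg tstar) u + \<sigma>g/2 * r\<^sup>2 + e" using sci fx fs unfolding \<delta>_def e_def by simp
      have cs: "\<bar>inner (gradg tstar) u\<bar> \<le> cg * r" unfolding cg_def r_def by (rule Cauchy_Schwarz_ineq2)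
      have r2: "\<sigma>g/2 * r\<^sup>2 \<le> \<delta>" using d1 fo by linarith
      have sr0: "0 \<le> \<sigma>g/2 * r\<^sup>2" using \<sigma>pos by simp
      have \<delta>0: "\<delta> \<ge> 0" using r2 sr0 by linarith
      have \<delta>M: "\<delta> \<le> M" using x unfolding \<delta>_def by simp
      have cg0: "cg \<ge> 0" "r \<ge> 0" unfolding cg_def r_def by auto
      have eup: "e \<le> \<delta> + cg * r" using d1 cs sr0 by linarith
      have elo: "- (cg * r) \<le> e" using fo cs by linarith
      have e2: "e\<^sup>2 \<le> 2 * \<delta>\<^sup>2 + 2 * cg\<^sup>2 * r\<^sup>2"
      proof (cases "e \<ge> 0")
        case True
        then have "e\<^sup>2 \<le> (\<delta> + cg * r)\<^sup>2" using eup by (intro power_mono) auto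
        also have "\<dots> = 2 * \<delta>\<^sup>2 + 2 * (cg * r)\<^sup>2 - (\<delta> - cg * r)\<^sup>2"
          by (simp add: power2_sum power2_diff)
        also have "\<dots> \<le> 2 * \<delta>\<^sup>2 + 2 * cg\<^sup>2 * r\<^sup>2" by (simp add: power_mult_distrib)
        finally show ?thesis .
      next
        case False
        then have "(- e)\<^sup>2 \<le> (cg * r)\<^sup>2" using elo by (intro power_mono) auto
        then have "e\<^sup>2 \<le> (cg * r)\<^sup>2" by simp
        also have "\<dots> \<le> 2 * \<delta>\<^sup>2 + 2 * cg\<^sup>2 * r\<^sup>2" by (simp add: power_mult_distrib)
        finally show ?thesis .
      qed
      have pp: "pos_part (C *v x - d) = 0"
        using x X_def unfolding pos_part_def by (auto simp: vec_eq_iff)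
      define D where "D = norm (x - xb)"
      have "D \<le> \<theta> * norm (u, e, pos_part (C *v x - d))"
        using hof unfolding D_def xb_def u_def e_def by blast
      also have "norm (u, e, pos_part (C *v x - d)) = sqrt (r\<^sup>2 + e\<^sup>2)"
        unfolding pp r_def by (simp add: norm_Pair)
      finally have "D \<le> \<theta> * sqrt (r\<^sup>2 + e\<^sup>2)" .
      then have "D\<^sup>2 \<le> (\<theta> * sqrt (r\<^sup>2 + e\<^sup>2))\<^sup>2" unfolding D_def by (intro power_mono) auto
      also have "\<dots> = \<theta>\<^sup>2 * (r\<^sup>2 + e\<^sup>2)" by (simp add: power_mult_distrib)
      finally have D2: "D\<^sup>2 \<le> \<theta>\<^sup>2 * (r\<^sup>2 + e\<^sup>2)" .
      have rb: "r\<^sup>2 \<le> 2 * \<delta> / \<sigma>g" using r2 \<sigma>pos by (simp add: field_simps)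
      have "\<delta>\<^sup>2 \<le> M * \<delta>" using \<delta>0 \<delta>M by (simp add: power2_eq_square mult_right_mono)
      then have "r\<^sup>2 + e\<^sup>2 \<le> r\<^sup>2 * (1 + 2 * cg\<^sup>2) + 2 * M * \<delta>" using e2 by (simp add: algebra_simps)
      also have "\<dots> \<le> 2 * \<delta> / \<sigma>g * (1 + 2 * cg\<^sup>2) + 2 * M * \<delta>"
        using rb by (intro add_right_mono mult_right_mono) auto
      also have "\<dots> = 2 * \<delta> / \<sigma>g * (1 + M * \<sigma>g + 2 * cg\<^sup>2)" using \<sigma>pos by (simp add: field_simps)
      finally have "r\<^sup>2 + e\<^sup>2 \<le> 2 * \<delta> / \<sigma>g * (1 + M * \<sigma>g + 2 * cg\<^sup>2)" .
      then have "D\<^sup>2 \<le> \<theta>\<^sup>2 * (2 * \<delta> / \<sigma>g * (1 + M * \<sigma>g + 2 * cg\<^sup>2))"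
        using D2 by (meson mult_left_mono zero_le_power2 order_trans)
      moreover define K where "K = 1 + M * \<sigma>g + 2 * cg\<^sup>2"
      moreover have "K > 0" proof -
        have "M * \<sigma>g > 0" using M \<sigma>pos by simp
        moreover have "cg\<^sup>2 \<ge> 0" by simp
        ultimately show ?thesis unfolding K_def by linarith
      qed
      ultimately have DK: "D\<^sup>2 \<le> \<theta>\<^sup>2 * (2 * \<delta> / \<sigma>g * K)" by simp
      have c0: "\<sigma>g / (\<theta>\<^sup>2 * K) / 2 \<ge> 0" using \<sigma>pos \<open>K > 0\<close> by simp
      have "\<sigma>g / (\<theta>\<^sup>2 * K) / 2 * D\<^sup>2 \<le> \<sigma>g / (\<theta>\<^sup>2 * K) / 2 * (\<theta>\<^sup>2 * (2 * \<delta> / \<sigma>g * K))"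
        using DK c0 by (rule mult_left_mono)
      also have "\<dots> = \<delta>" using \<sigma>pos \<open>K > 0\<close> th by (simp add: field_simps)
      finally have "\<sigma>g / (\<theta>\<^sup>2 * K) / 2 * D\<^sup>2 \<le> \<delta>" .
      then show ?thesis unfolding \<delta>_def D_def xb_def K_def cg_def .
    qed
    show ?thesis
      apply (rule conjI)
       apply (rule XS)
      apply (intro allI impI ballI)
      apply (rule bound)
          apply auto
      done
  qed
  define gradf where "gradf = (\<lambda>x. transpose A *v gradg (A *v x) + c)"
  have P3: "is_gradient f gradf"
    unfolding is_gradient_def
  proof
    fix x
    have fe: "f = (\<lambda>x. g (A *v x) + inner c x)" using f_def by auto
    have dA: "((\<lambda>x. A *v x) has_derivative (\<lambda>h. A *v h)) (at x)"
      by (rule bounded_linear_imp_has_derivative) simp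
    have dg: "(g has_derivative (\<lambda>h. inner (gradg (A *v x)) h)) (at (A *v x))"
      using grad unfolding is_gradient_def by blast
    have d1: "((\<lambda>x. g (A *v x)) has_derivative (\<lambda>h. inner (gradg (A *v x)) (A *v h))) (at x)"
      using diff_chain_at[OF dA dg] by (simp add: o_def)
    have d2: "((\<lambda>x. inner c x) has_derivative (\<lambda>h. inner c h)) (at x)"
      by (rule bounded_linear_imp_has_derivative) (rule bounded_linear_inner_right)
    have "(f has_derivative (\<lambda>h. inner (gradg (A *v x)) (A *v h) + inner c h)) (at x)"
      unfolding fe by (rule has_derivative_add[OF d1 d2])
    moreover have "(\<lambda>h. inner (gradg (A *v x)) (A *v h) + inner c h) = (\<lambda>h. inner (gradf x) h)"
      unfolding gradf_def by (auto simp: inner_add_left dot_lmul_matrix)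
    ultimately show "(f has_derivative (\<lambda>h. inner (gradf x) h)) (at x)" by simp
  qed
  have P4: "norm (gradf x - gradf y) \<le> Lg * (mat_norm A)\<^sup>2 * norm (x - y)" for x y
  proof -
    have m0: "mat_norm A \<ge> 0" unfolding mat_norm_def by (intro onorm_pos_le) auto
    have "gradf x - gradf y = transpose A *v (gradg (A *v x) - gradg (A *v y))"
      unfolding gradf_def by (simp add: algebra_simps)
    then have "norm (gradf x - gradf y) \<le> mat_norm A * norm (gradg (A *v x) - gradg (A *v y))"
      using transpose_norm_le by simp
    also have "\<dots> \<le> mat_norm A * (Lg * norm (A *v x - A *v y))"
      using lip m0 by (intro mult_left_mono) auto
    also have "norm (A *v x - A *v y) \<le> mat_norm A * norm (x - y)"
      unfolding mat_norm_def matrix_vector_mult_diff_distrib[symmetric] by (intro onorm) auto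
    then have "mat_norm A * (Lg * norm (A *v x - A *v y)) \<le> mat_norm A * (Lg * (mat_norm A * norm (x - y)))"
      using m0 Lg0 by (intro mult_left_mono) auto
    finally show ?thesis by (simp add: power2_eq_square algebra_simps)
  qed
  show ?thesis
    apply (rule conjI)
     apply (rule P1)
    apply (rule conjI)
     apply (intro allI impI)
     apply (rule P2)
     apply assumption
    apply (rule exI[of _ gradf])
    using P3 P4 by blast
qed

end
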